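(* In the Markov decision process setting below, assume (H0), (H1), (H2) hold for the associated fixed-point problem. Then for any $v^0\in\mathbb{R}^M$, the iterates $(v^\ell)_{\ell\ge1}$ of policy iteration converge to the vector $v\in\mathbb{R}^M$ with components $$v_i=\sup_{P\in\mathcal{P}}\mathbb{E}\Big[\sum_{n=0}^\infty U(X^n,P)\prod_{m=0}^{n-1}D(X^m,P)\,\Big|\,X^0=i\Big],\quad 1\le i\le M.$$
   Context: MDP setting: $\rho>0$; $\mathcal{P}=\prod_i(\mathcal{W}_i\times\mathcal{Z}_i\times\mathcal{D}_i)$ with $\mathcal{D}_i$ nonempty subsets of $\{0,1\}$ and $\mathcal{W}_i,\mathcal{Z}_i$ nonempty sets of probability vectors in $\mathbb{R}^M$ (nonnegative entries summing to 1); functions $c_i:\mathcal{W}_i\to\mathbb{R}$, $k_i:\mathcal{Z}_i\to\mathbb{R}$. For $P=(w,z,\psi)\in\mathcal{P}$, $(X^n)_{n\ge0}$ is the homogeneous Markov chain on $\{1,\dots,M\}$ with $\mathbb{P}(X^{n+1}=j\mid X^n=i)=w_{ij}$ if $\psi_i=0$ and $=z_{ij}$ if $\psi_i=1$; $U(i,P)=c_i(w_i)$ if $\psi_i=0$, $=k_i(z_i)$ if $\psi_i=1$; $D(i,P)=1/(1+\rho)$ if $\psi_i=0$, $=1$ if $\psi_i=1$. Associated fixed-point problem: $[L(w)]_{ij}=w_{ij}/(1+\rho)$, $[B(z)]_{ij}=z_{ij}$, $[c(w)]_i=c_i(w_i)$, $[k(z)]_i=k_i(z_i)$, and for some $\delta>0$,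 $A(P)=(I-\Psi)(I-L(w))+\delta\Psi(I-B(z))$, $b(P)=(I-\Psi)c(w)+\delta\Psi k(z)$, $\Psi=\operatorname{diag}(\psi)$; order and suprema componentwise. Policy iteration: given $v^0$, for $\ell\ge1$ choose $P^\ell$ with $-A(P^\ell)v^{\ell-1}+b(P^\ell)=\sup_{P}\{-A(P)v^{\ell-1}+b(P)\}$ and let $v^\ell$ solve $A(P^\ell)v^\ell=b(P^\ell)$. (H0): $P\mapsto A(P)^{-1}$ is bounded on $\{P: A(P)\text{ nonsingular}\}$. (H1): (i) $A,b$ bounded on $\mathcal{P}$; (ii) for every $x$ the supremum $\sup_P\{-A(P)x+b(P)\}$ is attained by some $P_x\in\mathcal{P}$. (H2): for each $P=(w,z,\psi)$ and each $i$ with $\psi_i=1$ there is a path in the directed graph of $B(z)$ (edge $i\to j$ iff $[B(z)]_{ij}\ne0$; trivial paths allowed) from $i$ to some $j$ with $\psi_j=0$. *)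

theory Defs
  imports "HOL-Analysis.Analysis" "HOL-Probability.Probability"
begin

text \<open>States are the elements of a finite type 'm (playing the role of 1..M).
A policy P = (w, z, psi): w and z are matrices whose i-th rows are w_i and z_i,
psi is the vector of switching decisions (entries in {0,1}).\<close>

type_synonym 'm policy = "(real^'m^'m) \<times> (real^'m^'m) \<times> (real^'m)"

definition prob_vec :: "real^'m::finite \<Rightarrow> bool" where
  "prob_vec p \<longleftrightarrow> (\<forall>j. 0 \<le> p$j) \<and> (\<Sum>j\<in>UNIV. p$j) = 1"

definition policies ::
  "('m::finite \<Rightarrow> (real^'m) set) \<Rightarrow> ('m \<Rightarrow> (real^'m) set) \<Rightarrow> ('m \<Rightarrow> real set) \<Rightarrow> 'm policy set" where
  "policies W Z Ds = {(w, z, \<psi>). \<forall>i. w$i \<in> W i \<and> z$i \<in> Z i \<and> \<psi>$i \<in> Ds i}"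

definition Lmat :: "real \<Rightarrow> real^'m::finite^'m \<Rightarrow> real^'m^'m" where
  "Lmat \<rho> w = (\<chi> i j. w$i$j / (1 + \<rho>))"

definition Bmat :: "real^'m::finite^'m \<Rightarrow> real^'m^'m" where
  "Bmat z = (\<chi> i j. z$i$j)"

definition Psi :: "real^'m::finite \<Rightarrow> real^'m^'m" where
  "Psi \<psi> = (\<chi> i j. if i = j then \<psi>$i else 0)"

definition cvec :: "('m::finite \<Rightarrow> real^'m \<Rightarrow> real) \<Rightarrow> real^'m^'m \<Rightarrow> real^'m" where
  "cvec c w = (\<chi> i. c i (w$i))"

definition Amat :: "real \<Rightarrow> real \<Rightarrow> 'm::finite policy \<Rightarrow> real^'m^'m" where
  "Amat \<rho> \<delta> P = (case P of (w, z, \<psi>) \<Rightarrow>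
     (mat 1 - Psi \<psi>) ** (mat 1 - Lmat \<rho> w) + \<delta> *\<^sub>R (Psi \<psi> ** (mat 1 - Bmat z)))"

definition bvec :: "real \<Rightarrow> ('m::finite \<Rightarrow> real^'m \<Rightarrow> real) \<Rightarrow> ('m \<Rightarrow> real^'m \<Rightarrow> real)
    \<Rightarrow> 'm policy \<Rightarrow> real^'m" where
  "bvec \<delta> c k P = (case P of (w, z, \<psi>) \<Rightarrow>
     (mat 1 - Psi \<psi>) *v cvec c w + \<delta> *\<^sub>R (Psi \<psi> *v cvec k z))"

definition supv :: "'p set \<Rightarrow> ('p \<Rightarrow> real^'m::finite) \<Rightarrow> real^'m" where
  "supv S f = (\<chi> i. SUP P\<in>S. f P $ i)"

definition Uf :: "('m::finite \<Rightarrow> real^'m \<Rightarrow> real) \<Rightarrow> ('m \<Rightarrow> real^'m \<Rightarrow> real)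
    \<Rightarrow> 'm policy \<Rightarrow> 'm \<Rightarrow> real" where
  "Uf c k P i = (case P of (w, z, \<psi>) \<Rightarrow> if \<psi>$i = 0 then c i (w$i) else k i (z$i))"

definition Df :: "real \<Rightarrow> 'm::finite policy \<Rightarrow> 'm \<Rightarrow> real" where
  "Df \<rho> P i = (case P of (w, z, \<psi>) \<Rightarrow> if \<psi>$i = 0 then 1 / (1 + \<rho>) else 1)"

text \<open>Markov chain of policy P: transition row of state a, realised by the
random mapping representation X^{n+1} = G_n(X^n) with G_0, G_1, ... i.i.d.
random maps whose value at a is distributed according to row a.\<close>
definition trans_row :: "'m::finite policy \<Rightarrow> 'm \<Rightarrow> real^'m" where
  "trans_row P a = (case P of (w, z, \<psi>) \<Rightarrow> if \<psi>$a = 0 then w$a else z$a)"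

definition trans_pmf :: "'m::finite policy \<Rightarrow> 'm \<Rightarrow> 'm pmf" where
  "trans_pmf P a = embed_pmf (\<lambda>b. trans_row P a $ b)"

definition step_pmf :: "'m::finite policy \<Rightarrow> ('m \<Rightarrow> 'm) pmf" where
  "step_pmf P = Pi_pmf UNIV undefined (trans_pmf P)"

definition path_space :: "'m::finite policy \<Rightarrow> ('m \<Rightarrow> 'm) stream measure" where
  "path_space P = stream_space (measure_pmf (step_pmf P))"

primrec chain :: "'m \<Rightarrow> ('m \<Rightarrow> 'm) stream \<Rightarrow> nat \<Rightarrow> 'm" where
  "chain i \<omega> 0 = i"
| "chain i \<omega> (Suc n) = (\<omega> !! n) (chain i \<omega> n)"

definition mdp_value :: "real \<Rightarrow> ('m::finite \<Rightarrow> real^'m \<Rightarrow> real) \<Rightarrow> ('m \<Rightarrow> real^'m \<Rightarrow> real)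
    \<Rightarrow> 'm policy \<Rightarrow> 'm \<Rightarrow> real" where
  "mdp_value \<rho> c k P i = (\<integral>\<omega>. (\<Sum>n. Uf c k P (chain i \<omega> n) * (\<Prod>m<n. Df \<rho> P (chain i \<omega> m))) \<partial>path_space P)"

end

theory Submission
  imports Defs
begin


definition Tf :: "real \<Rightarrow> 'm::finite policy \<Rightarrow> ('m \<Rightarrow> real) \<Rightarrow> 'm \<Rightarrow> real" where
  "Tf \<rho> P f a = Df \<rho> P a * (\<Sum>j\<in>UNIV. trans_row P a $ j * f j)"

lemma measurable_chain[measurable]:
  "(\<lambda>\<omega>. chain i \<omega> n) \<in> measurable (stream_space (measure_pmf (M::('m::finite \<Rightarrow> 'm) pmf))) (count_space UNIV)"
proof (induction n)
  case 0 then show ?case by simp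
next
  case (Suc n)
  have "(\<lambda>\<omega>. (\<lambda>a. (\<omega> !! n) a) (chain i \<omega> n) ) \<in> measurable (stream_space (measure_pmf M)) (count_space UNIV)"
  proof (rule measurable_compose_countable[OF _ Suc])
    fix a
    have "(\<lambda>f::'m\<Rightarrow>'m. f a) \<in> measurable (measure_pmf M) (count_space UNIV)"
      unfolding measurable_def by auto
    then show "(\<lambda>\<omega>. (\<omega> !! n) a) \<in> measurable (stream_space (measure_pmf M)) (count_space UNIV)"
      by (rule measurable_compose[OF measurable_snth])
  qed
  then show ?case by simp
qed

context
  fixes P :: "'m::finite policy"
  assumes pv: "\<And>a. prob_vec (trans_row P a)"
begin

lemma pmf_trans: "pmf (trans_pmf P a) b = trans_row P a $ b"
  unfolding trans_pmf_def
proof (rule pmf_embed_pmf)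
  show "\<And>x. 0 \<le> trans_row P a $ x" using pv[of a] by (simp add: prob_vec_def)
  show "(\<integral>\<^sup>+x. ennreal (trans_row P a $ x) \<partial>count_space UNIV) = 1"
    using pv[of a] by (simp add: prob_vec_def nn_integral_count_space_finite)
qed

lemma nn_step: "(\<integral>\<^sup>+x. h (x a) \<partial>measure_pmf (step_pmf P)) = (\<Sum>j\<in>UNIV. ennreal (trans_row P a $ j) * h j)"
proof -
  have "(\<integral>\<^sup>+x. h (x a) \<partial>measure_pmf (step_pmf P)) = (\<integral>\<^sup>+j. h j \<partial>measure_pmf (map_pmf (\<lambda>f. f a) (step_pmf P)))"
    by simp
  also have "map_pmf (\<lambda>f. f a) (step_pmf P) = trans_pmf P a"
    unfolding step_pmf_def by (subst Pi_pmf_component) auto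
  finally show ?thesis
    by (simp add: nn_integral_measure_pmf nn_integral_count_space_finite pmf_trans)
qed

end

lemma chain_Stream: "chain i (x ## \<omega>) (Suc n) = chain (x i) \<omega> n"
  by (induction n) auto

definition tm :: "real \<Rightarrow> 'm::finite policy \<Rightarrow> ('m \<Rightarrow> real) \<Rightarrow> 'm \<Rightarrow> ('m \<Rightarrow> 'm) stream \<Rightarrow> nat \<Rightarrow> real" where
  "tm \<rho> P g i \<omega> n = g (chain i \<omega> n) * (\<Prod>m<n. Df \<rho> P (chain i \<omega> m))"

lemma tm_Stream: "tm \<rho> P g i (x ## \<omega>) (Suc n) = Df \<rho> P i * tm \<rho> P g (x i) \<omega> n"
  by (simp only: tm_def prod.lessThan_Suc_shift chain_Stream chain.simps(1)) simp

lemma Df_nonneg: "\<rho> > 0 \<Longrightarrow> 0 \<le> Df \<rho> P a"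
  by (auto simp: Df_def split: prod.splits)

lemma Df_le1: "\<rho> > 0 \<Longrightarrow> Df \<rho> P a \<le> 1"
  by (auto simp: Df_def split: prod.splits)

lemma measurable_tm[measurable]:
  "(\<lambda>\<omega>. tm \<rho> P g i \<omega> n) \<in> borel_measurable (stream_space (measure_pmf M))"
  unfolding tm_def
  by (intro borel_measurable_times borel_measurable_prod measurable_compose[OF measurable_chain]) auto

context
  fixes P :: "'m::finite policy" and \<rho> :: real
  assumes pv: "\<And>a. prob_vec (trans_row P a)" and rho: "\<rho> > 0"
begin

lemma Tpow_nonneg: "(\<And>j. 0 \<le> g j) \<Longrightarrow> 0 \<le> (Tf \<rho> P ^^ n) g i"
proof (induction n arbitrary: i)
  case 0 then show ?case by simp
next
  case (Suc n)
  have "\<And>j. 0 \<le> trans_row P i $ j" using pv[of i] by (simp add: prob_vec_def)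
  then have "0 \<le> Tf \<rho> P ((Tf \<rho> P ^^ n) g) i" using Suc Df_nonneg[OF rho, of P]
    unfolding Tf_def by (intro mult_nonneg_nonneg sum_nonneg) auto
  then show ?case by simp
qed

lemma tm_nonneg: assumes "\<And>j. 0 \<le> g j" shows "0 \<le> tm \<rho> P g i \<omega> n"
  unfolding tm_def using Df_nonneg[OF rho, of P] assms by (intro mult_nonneg_nonneg prod_nonneg) auto

lemma nn_tm: "(\<And>j. 0 \<le> g j) \<Longrightarrow>
  (\<integral>\<^sup>+\<omega>. ennreal (tm \<rho> P g i \<omega> n) \<partial>path_space P) = ennreal ((Tf \<rho> P ^^ n) g i)"
proof (induction n arbitrary: i)
  case 0
  interpret S: prob_space "path_space P"
    unfolding path_space_def by (rule prob_space.prob_space_stream_space) (rule prob_space_measure_pmf)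
  show ?case by (simp add: tm_def S.emeasure_space_1)
next
  case (Suc n)
  have "(\<integral>\<^sup>+\<omega>. ennreal (tm \<rho> P g i \<omega> (Suc n)) \<partial>path_space P)
     = (\<integral>\<^sup>+x. (\<integral>\<^sup>+\<omega>. ennreal (tm \<rho> P g i (x ## \<omega>) (Suc n)) \<partial>path_space P) \<partial>measure_pmf (step_pmf P))"
    unfolding path_space_def by (rule prob_space.nn_integral_stream_space[OF prob_space_measure_pmf]) measurable
  also have "\<dots> = (\<integral>\<^sup>+x. ennreal (Df \<rho> P i) * ennreal ((Tf \<rho> P ^^ n) g (x i)) \<partial>measure_pmf (step_pmf P))"
  proof -
    have e: "\<And>x \<omega>. ennreal (tm \<rho> P g i (x ## \<omega>) (Suc n)) = ennreal (Df \<rho> P i) * ennreal (tm \<rho> P g (x i) \<omega> n)"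
      unfolding tm_Stream by (rule ennreal_mult[OF Df_nonneg[OF rho] tm_nonneg[OF Suc.prems]])
    have i: "\<And>x. (\<integral>\<^sup>+\<omega>. ennreal (Df \<rho> P i) * ennreal (tm \<rho> P g (x i) \<omega> n) \<partial>path_space P)
       = ennreal (Df \<rho> P i) * ennreal ((Tf \<rho> P ^^ n) g (x i))"
      by (subst nn_integral_cmult) (auto simp: path_space_def Suc.IH[OF Suc.prems, unfolded path_space_def])
    show ?thesis unfolding e i ..
  qed
  also have "\<dots> = (\<Sum>j\<in>UNIV. ennreal (trans_row P i $ j) * (ennreal (Df \<rho> P i) * ennreal ((Tf \<rho> P ^^ n) g j)))"
    by (rule nn_step[OF pv])
  also have "\<dots> = ennreal (Tf \<rho> P ((Tf \<rho> P ^^ n) g) i)"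
  proof -
    have p: "\<And>j. 0 \<le> trans_row P i $ j" using pv[of i] by (simp add: prob_vec_def)
    have t: "\<And>j. 0 \<le> (Tf \<rho> P ^^ n) g j" by (rule Tpow_nonneg[OF Suc.prems])
    have d: "0 \<le> Df \<rho> P i" by (rule Df_nonneg[OF rho])
    have "\<And>j. ennreal (trans_row P i $ j) * (ennreal (Df \<rho> P i) * ennreal ((Tf \<rho> P ^^ n) g j))
        = ennreal (Df \<rho> P i * (trans_row P i $ j * (Tf \<rho> P ^^ n) g j))"
      using p t d by (simp add: ennreal_mult[symmetric] mult_ac)
    then have "(\<Sum>j\<in>UNIV. ennreal (trans_row P i $ j) * (ennreal (Df \<rho> P i) * ennreal ((Tf \<rho> P ^^ n) g j)))
       = ennreal (\<Sum>j\<in>UNIV. Df \<rho> P i * (trans_row P i $ j * (Tf \<rho> P ^^ n) g j))"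
      using p t d by (simp add: sum_nonneg)
    then show ?thesis by (simp add: Tf_def sum_distrib_left)
  qed
  finally show ?case by simp
qed

end

lemma Tf_diff: "Tf \<rho> P (\<lambda>j. f j - h j) = (\<lambda>i. Tf \<rho> P f i - Tf \<rho> P h i)"
  by (auto simp: Tf_def sum_subtractf right_diff_distrib)

lemma Tpow_diff: "(Tf \<rho> P ^^ n) (\<lambda>j. f j - h j) = (\<lambda>i. (Tf \<rho> P ^^ n) f i - (Tf \<rho> P ^^ n) h i)"
  by (induction n) (auto simp: Tf_diff)

lemma Tf_cmult: "Tf \<rho> P (\<lambda>j. c * f j) = (\<lambda>i. c * Tf \<rho> P f i)"
  by (auto simp: Tf_def sum_distrib_left mult_ac)

lemma Tpow_cmult: "(Tf \<rho> P ^^ n) (\<lambda>j. c * f j) = (\<lambda>i. c * (Tf \<rho> P ^^ n) f i)"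
  by (induction n) (auto simp: Tf_cmult)

context
  fixes P :: "'m::finite policy" and \<rho> :: real
  assumes pv: "\<And>a. prob_vec (trans_row P a)" and rho: "\<rho> > 0"
begin

lemma Tf_mono: "(\<And>j. f j \<le> h j) \<Longrightarrow> Tf \<rho> P f i \<le> Tf \<rho> P h i"
  unfolding Tf_def using pv[of i] Df_nonneg[OF rho, of P i]
  by (intro mult_left_mono sum_mono) (auto simp: prob_vec_def mult_left_mono)

lemma Tpow_mono: "(\<And>j. f j \<le> h j) \<Longrightarrow> (Tf \<rho> P ^^ n) f i \<le> (Tf \<rho> P ^^ n) h i"
proof (induction n arbitrary: i)
  case (Suc n) then show ?case by (simp add: Tf_mono)
qed simp

lemma Tf_one: "Tf \<rho> P (\<lambda>_. 1) i \<le> 1"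
  using pv[of i] Df_le1[OF rho, of P i] by (simp add: Tf_def prob_vec_def)

lemma Tpow_one: "(Tf \<rho> P ^^ n) (\<lambda>_. 1) i \<le> 1"
proof (induction n arbitrary: i)
  case (Suc n)
  have "(Tf \<rho> P ^^ Suc n) (\<lambda>_. 1) i \<le> Tf \<rho> P (\<lambda>_. 1) i"
    by simp (rule Tf_mono, rule Suc)
  then show ?case using Tf_one[of i] by linarith
qed simp

lemma Tpow_one_dec: "(Tf \<rho> P ^^ Suc n) (\<lambda>_. 1) i \<le> (Tf \<rho> P ^^ n) (\<lambda>_. 1) i"
  unfolding funpow_Suc_right o_def by (rule Tpow_mono) (rule Tf_one)

lemma Tpow_one_antimono: "m \<le> n \<Longrightarrow> (Tf \<rho> P ^^ n) (\<lambda>_. 1) i \<le> (Tf \<rho> P ^^ m) (\<lambda>_. 1) i"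
proof (induction n rule: dec_induct)
  case (step n) then show ?case using Tpow_one_dec[of n i] by linarith
qed simp

lemma Tpow_abs: "\<bar>(Tf \<rho> P ^^ n) f i\<bar> \<le> (Tf \<rho> P ^^ n) (\<lambda>j. \<bar>f j\<bar>) i"
proof -
  have "(Tf \<rho> P ^^ n) f i \<le> (Tf \<rho> P ^^ n) (\<lambda>j. \<bar>f j\<bar>) i" by (rule Tpow_mono) simp
  moreover have "(Tf \<rho> P ^^ n) (\<lambda>j. -1 * \<bar>f j\<bar>) i \<le> (Tf \<rho> P ^^ n) f i" by (rule Tpow_mono) simp
  ultimately show ?thesis unfolding Tpow_cmult by simp
qed

lemma Tpow_bound: "(\<And>j. \<bar>f j\<bar> \<le> K) \<Longrightarrow> \<bar>(Tf \<rho> P ^^ n) f i\<bar> \<le> K * (Tf \<rho> P ^^ n) (\<lambda>_. 1) i"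
proof -
  assume K: "\<And>j. \<bar>f j\<bar> \<le> K"
  have "(Tf \<rho> P ^^ n) (\<lambda>j. \<bar>f j\<bar>) i \<le> (Tf \<rho> P ^^ n) (\<lambda>j. K * 1) i" by (rule Tpow_mono) (simp add: K)
  then show ?thesis using Tpow_abs[of n f i] unfolding Tpow_cmult by linarith
qed

lemma tm_integral_nonneg:
  assumes "\<And>j. 0 \<le> g j"
  shows "integrable (path_space P) (\<lambda>\<omega>. tm \<rho> P g i \<omega> n)
     \<and> (\<integral>\<omega>. tm \<rho> P g i \<omega> n \<partial>path_space P) = (Tf \<rho> P ^^ n) g i"
  using nn_tm[OF pv rho assms, where i=i and n=n]
  by (subst (asm) nn_integral_eq_integrable)
     (auto simp: path_space_def tm_nonneg[OF pv rho assms] Tpow_nonneg[OF pv rho assms])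

lemma tm_integral:
  shows "integrable (path_space P) (\<lambda>\<omega>. tm \<rho> P g i \<omega> n)
     \<and> (\<integral>\<omega>. tm \<rho> P g i \<omega> n \<partial>path_space P) = (Tf \<rho> P ^^ n) g i"
proof -
  define gp where "gp = (\<lambda>j. max (g j) 0)"
  define gn where "gn = (\<lambda>j. max (- g j) 0)"
  have g: "g = (\<lambda>j. gp j - gn j)" by (auto simp: gp_def gn_def)
  have tm: "\<And>\<omega>. tm \<rho> P g i \<omega> n = tm \<rho> P gp i \<omega> n - tm \<rho> P gn i \<omega> n"
    by (subst g) (simp add: tm_def left_diff_distrib)
  have p: "integrable (path_space P) (\<lambda>\<omega>. tm \<rho> P gp i \<omega> n)
     \<and> (\<integral>\<omega>. tm \<rho> P gp i \<omega> n \<partial>path_space P) = (Tf \<rho> P ^^ n) gp i"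
    by (rule tm_integral_nonneg) (simp add: gp_def)
  have n: "integrable (path_space P) (\<lambda>\<omega>. tm \<rho> P gn i \<omega> n)
     \<and> (\<integral>\<omega>. tm \<rho> P gn i \<omega> n \<partial>path_space P) = (Tf \<rho> P ^^ n) gn i"
    by (rule tm_integral_nonneg) (simp add: gn_def)
  have "(Tf \<rho> P ^^ n) g i = (Tf \<rho> P ^^ n) gp i - (Tf \<rho> P ^^ n) gn i"
    by (subst g) (simp only: Tpow_diff)
  then show ?thesis unfolding tm using p n by simp
qed

end



lemma powr_div_bound:
  fixes q :: real assumes q: "0 < q" "q < 1" and N: "N > 0"
  shows "q ^ (n div N) \<le> (1/q) * (q powr (1 / real N)) ^ n"
proof -
  have e1: "(q powr (1 / real N)) ^ n = q powr (real n / real N)"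
    using q by (simp add: powr_realpow[symmetric] powr_powr)
  have "real n / real N \<le> real (n div N) + 1"
  proof -
    have "real n = real (n div N) * real N + real (n mod N)"
      by (metis of_nat_add of_nat_mult div_mult_mod_eq)
    moreover have "real (n mod N) < real N" using N by simp
    ultimately have "real n < (real (n div N) + 1) * real N" by (simp add: algebra_simps)
    then show ?thesis using N by (simp add: field_simps)
  qed
  then have "q powr (real (n div N) + 1) \<le> q powr (real n / real N)"
    using q by (intro powr_mono') auto
  moreover have "q powr (real (n div N) + 1) = q ^ (n div N) * q"
    using q by (simp add: powr_add powr_realpow)
  ultimately show ?thesis unfolding e1 using q by (simp add: field_simps)
qed

context
  fixes P :: "'m::finite policy" and \<rho> :: real
  assumes pv: "\<And>a. prob_vec (trans_row P a)" and rho: "\<rho> > 0"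
  and hs: "\<And>a. \<exists>n. (Tf \<rho> P ^^ n) (\<lambda>_. 1) a < 1"
begin

lemma geometric: "\<exists>C r. 0 < r \<and> r < 1 \<and> (\<forall>n a. (Tf \<rho> P ^^ n) (\<lambda>_. 1) a \<le> C * r ^ n)"
proof -
  define s where "s n a = (Tf \<rho> P ^^ n) (\<lambda>_. 1) a" for n a
  obtain nf where nf: "\<And>a. s (nf a) a < 1" using hs unfolding s_def by metis
  define N where "N = Suc (Max (range nf))"
  have sN: "s N a < 1" for a
  proof -
    have "nf a \<le> N" unfolding N_def by (simp add: le_SucI)
    then have "s N a \<le> s (nf a) a" unfolding s_def by (rule Tpow_one_antimono[OF pv rho])
    then show ?thesis using nf[of a] by linarith
  qed
  define q where "q = max (1/2) (Max (range (s N)))"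
  have q0: "0 < q" unfolding q_def by simp
  have q1: "q < 1" unfolding q_def using sN by (auto simp: Max_less_iff)
  have sNq: "s N a \<le> q" for a unfolding q_def by (simp add: le_max_iff_disj)
  have step: "s (n + N) a \<le> q * s n a" for n a
  proof -
    have "s (n + N) a = (Tf \<rho> P ^^ n) (s N) a" unfolding s_def by (simp add: funpow_add)
    also have "\<dots> \<le> (Tf \<rho> P ^^ n) (\<lambda>_. q * 1) a" by (rule Tpow_mono[OF pv rho]) (simp add: sNq)
    also have "\<dots> = q * s n a" unfolding s_def Tpow_cmult by simp
    finally show ?thesis .
  qed
  have kb: "s (k * N + r) a \<le> q ^ k" for k r a
  proof (induction k arbitrary: a)
    case 0 then show ?case unfolding s_def using Tpow_one[OF pv rho] by simp
  next
    case (Suc k)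
    have "s (Suc k * N + r) a = s ((k * N + r) + N) a" by (simp add: algebra_simps)
    also have "\<dots> \<le> q * s (k * N + r) a" by (rule step)
    also have "\<dots> \<le> q * q ^ k" using Suc q0 by (intro mult_left_mono) auto
    finally show ?case by simp
  qed
  have N0: "N > 0" unfolding N_def by simp
  have "s n a \<le> (1/q) * (q powr (1 / real N)) ^ n" for n a
  proof -
    have "s n a = s ((n div N) * N + n mod N) a" by simp
    also have "\<dots> \<le> q ^ (n div N)" by (rule kb)
    also have "\<dots> \<le> (1/q) * (q powr (1 / real N)) ^ n" by (rule powr_div_bound[OF q0 q1 N0])
    finally show ?thesis .
  qed
  moreover have "0 < q powr (1 / real N)" using q0 by simp
  moreover have "q powr (1 / real N) < 1" using powr_less_mono2[of "1 / real N" q 1] q0 q1 N0 by simp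
  ultimately show ?thesis unfolding s_def by blast
qed

lemma summable_Tpow_abs: "summable (\<lambda>n. (Tf \<rho> P ^^ n) (\<lambda>j. \<bar>g j\<bar>) i)"
proof -
  obtain C r where r: "0 < r" "r < 1" and Cr: "\<And>n a. (Tf \<rho> P ^^ n) (\<lambda>_. 1) a \<le> C * r ^ n"
    using geometric by blast
  define K where "K = (\<Sum>j\<in>UNIV. \<bar>g j\<bar>)"
  have K: "\<bar>\<bar>g j\<bar>\<bar> \<le> K" for j unfolding K_def by simp (rule member_le_sum, auto)
  have nb: "norm ((Tf \<rho> P ^^ n) (\<lambda>j. \<bar>g j\<bar>) i) \<le> K * C * r ^ n" for n
  proof -
    have K0: "0 \<le> K" using K[of undefined] by linarith
    have "norm ((Tf \<rho> P ^^ n) (\<lambda>j. \<bar>g j\<bar>) i) \<le> K * (Tf \<rho> P ^^ n) (\<lambda>_. 1) i"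
      using Tpow_bound[OF pv rho K] by simp
    also have "\<dots> \<le> K * (C * r ^ n)" using Cr K0 by (intro mult_left_mono) auto
    finally show ?thesis by (simp add: mult_ac)
  qed
  have sK: "summable (\<lambda>n. K * C * r ^ n)" using r by (intro summable_mult summable_geometric) auto
  show ?thesis by (rule summable_comparison_test'[OF sK, where N=0]) (rule nb)
qed

lemma summable_Tpow: "summable (\<lambda>n. (Tf \<rho> P ^^ n) g i)"
  by (rule summable_comparison_test'[OF summable_Tpow_abs[of g i], where N=0])
     (simp add: Tpow_abs[OF pv rho])

lemma value_integral: "(\<integral>\<omega>. (\<Sum>n. tm \<rho> P g i \<omega> n) \<partial>path_space P) = (\<Sum>n. (Tf \<rho> P ^^ n) g i)"
proof -
  define ag where "ag = (\<lambda>j. \<bar>g j\<bar>)"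
  have ag0: "\<And>j. 0 \<le> ag j" unfolding ag_def by simp
  have nrm: "norm (tm \<rho> P g i \<omega> n) = tm \<rho> P ag i \<omega> n" for \<omega> n
    unfolding tm_def ag_def using Df_nonneg[OF rho, of P]
    by (simp add: abs_mult prod_nonneg)
  have int: "\<And>n. integrable (path_space P) (\<lambda>\<omega>. tm \<rho> P g i \<omega> n)"
    using tm_integral[OF pv rho] by blast
  have sn: "summable (\<lambda>n. \<integral>\<omega>. norm (tm \<rho> P g i \<omega> n) \<partial>path_space P)"
    unfolding nrm using tm_integral[OF pv rho, of ag] summable_Tpow_abs[of g i]
    by (simp add: ag_def)
  have ae: "AE \<omega> in path_space P. summable (\<lambda>n. norm (tm \<rho> P g i \<omega> n))"
  proof -
    have "(\<integral>\<^sup>+\<omega>. (\<Sum>n. ennreal (tm \<rho> P ag i \<omega> n)) \<partial>path_space P)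
        = (\<Sum>n. \<integral>\<^sup>+\<omega>. ennreal (tm \<rho> P ag i \<omega> n) \<partial>path_space P)"
      by (rule nn_integral_suminf) (simp add: path_space_def)
    also have "\<dots> = (\<Sum>n. ennreal ((Tf \<rho> P ^^ n) ag i))"
      by (simp add: nn_tm[OF pv rho ag0])
    also have "\<dots> \<noteq> top"
      using summable_Tpow_abs[of g i] Tpow_nonneg[OF pv rho ag0]
      by (intro ennreal_suminf_neq_top) (auto simp: ag_def)
    finally have "AE \<omega> in path_space P. (\<Sum>n. ennreal (tm \<rho> P ag i \<omega> n)) \<noteq> \<infinity>"
      by (intro nn_integral_noteq_infinite) (auto simp: path_space_def)
    then show ?thesis
    proof eventually_elim
      case (elim \<omega>)
      have "summable (\<lambda>n. tm \<rho> P ag i \<omega> n)"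
        by (rule summable_suminf_not_top[OF tm_nonneg[OF pv rho ag0]]) (use elim in simp)
      then show ?case by (simp only: nrm)
    qed
  qed
  have "(\<lambda>n. \<integral>\<omega>. tm \<rho> P g i \<omega> n \<partial>path_space P) sums (\<integral>\<omega>. (\<Sum>n. tm \<rho> P g i \<omega> n) \<partial>path_space P)"
    by (rule sums_integral[OF int ae sn])
  then have "(\<lambda>n. (Tf \<rho> P ^^ n) g i) sums (\<integral>\<omega>. (\<Sum>n. tm \<rho> P g i \<omega> n) \<partial>path_space P)"
    using tm_integral[OF pv rho, of g i] by simp
  then show ?thesis by (simp add: sums_iff)
qed

lemma value_fix: "(\<Sum>n. (Tf \<rho> P ^^ n) g i) = g i + Tf \<rho> P (\<lambda>j. \<Sum>n. (Tf \<rho> P ^^ n) g j) i"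
proof -
  have "(\<Sum>n. (Tf \<rho> P ^^ n) g i) = g i + (\<Sum>n. (Tf \<rho> P ^^ Suc n) g i)"
    using suminf_split_head[OF summable_Tpow[of g i]] by simp
  also have "(\<Sum>n. (Tf \<rho> P ^^ Suc n) g i)
     = (\<Sum>n. Df \<rho> P i * (\<Sum>j\<in>UNIV. trans_row P i $ j * (Tf \<rho> P ^^ n) g j))"
    by (simp add: Tf_def)
  also have "\<dots> = Df \<rho> P i * (\<Sum>n. (\<Sum>j\<in>UNIV. trans_row P i $ j * (Tf \<rho> P ^^ n) g j))"
    by (intro suminf_mult summable_sum summable_mult summable_Tpow)
  also have "(\<Sum>n. (\<Sum>j\<in>UNIV. trans_row P i $ j * (Tf \<rho> P ^^ n) g j))
      = (\<Sum>j\<in>UNIV. (\<Sum>n. trans_row P i $ j * (Tf \<rho> P ^^ n) g j))"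
    by (intro suminf_sum summable_mult summable_Tpow)
  also have "\<dots> = (\<Sum>j\<in>UNIV. trans_row P i $ j * (\<Sum>n. (Tf \<rho> P ^^ n) g j))"
    by (intro sum.cong refl suminf_mult summable_Tpow)
  finally show ?thesis unfolding Tf_def[where f="\<lambda>j. \<Sum>n. (Tf \<rho> P ^^ n) g j"] .
qed

end



context
  fixes \<rho> \<delta> :: real
    and W Z :: "'m::finite \<Rightarrow> (real^'m) set"
    and Ds :: "'m \<Rightarrow> real set"
    and c k :: "'m \<Rightarrow> real^'m \<Rightarrow> real"
  assumes rho: "\<rho> > 0"
    and delta: "\<delta> > 0"
    and W: "\<And>i. W i \<noteq> {} \<and> (\<forall>p\<in>W i. prob_vec p)"
    and Z: "\<And>i. Z i \<noteq> {} \<and> (\<forall>p\<in>Z i. prob_vec p)"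
    and Ds: "\<And>i. Ds i \<noteq> {} \<and> Ds i \<subseteq> {0, 1}"
    and H2: "\<And>w z \<psi> i. (w, z, \<psi>) \<in> policies W Z Ds \<Longrightarrow> \<psi>$i = 1 \<Longrightarrow>
               \<exists>j. \<psi>$j = 0 \<and> (i, j) \<in> {(a, b). Bmat z $ a $ b \<noteq> 0}\<^sup>*"
begin

lemma pol_pv: "P \<in> policies W Z Ds \<Longrightarrow> prob_vec (trans_row P a)"
proof -
  obtain w z \<psi> where Pe: "P = (w, z, \<psi>)" by (cases P) auto
  assume "P \<in> policies W Z Ds"
  then have "w$a \<in> W a" "z$a \<in> Z a" by (auto simp: Pe policies_def)
  then show ?thesis using W[of a] Z[of a] by (auto simp: Pe trans_row_def)
qed

lemma pol_psi: "(w, z, \<psi>) \<in> policies W Z Ds \<Longrightarrow> \<psi>$a = 0 \<or> \<psi>$a = 1"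
  using Ds[of a] by (auto simp: policies_def)

definition Dl :: "'m policy \<Rightarrow> 'm \<Rightarrow> real" where
  "Dl P i = (case P of (w, z, \<psi>) \<Rightarrow> if \<psi>$i = 0 then 1 else \<delta>)"

lemma Dl_pos: "Dl P i > 0"
  using delta by (auto simp: Dl_def split: prod.splits)

lemma Amat_apply:
  assumes P: "P \<in> policies W Z Ds"
  shows "(Amat \<rho> \<delta> P *v x) $ i = Dl P i * (x $ i - Tf \<rho> P (($) x) i)"
proof -
  obtain w z \<psi> where Pe: "P = (w, z, \<psi>)" by (cases P) auto
  have psi: "\<psi>$i = 0 \<or> \<psi>$i = 1" using pol_psi P Pe by blast
  have A: "Amat \<rho> \<delta> P *v x = (mat 1 - Psi \<psi>) *v (x - Lmat \<rho> w *v x) + \<delta> *\<^sub>R (Psi \<psi> *v (x - Bmat z *v x))"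
    by (simp add: Amat_def Pe matrix_vector_mult_add_rdistrib scaleR_matrix_vector_assoc[symmetric]
        matrix_vector_mul_assoc[symmetric] matrix_vector_mult_diff_rdistrib)
  have Psi: "(Psi \<psi> *v y) $ i = \<psi>$i * y$i" for y :: "real^'m"
  proof -
    have "\<And>j. (if i = j then \<psi>$i else 0) * y$j = (if i = j then \<psi>$i * y$i else 0)" by auto
    then show ?thesis by (simp add: Psi_def matrix_vector_mult_def)
  qed
  have L: "(Lmat \<rho> w *v x) $ i = (\<Sum>j\<in>UNIV. w$i$j * x$j) / (1 + \<rho>)"
    by (simp add: Lmat_def matrix_vector_mult_def sum_divide_distrib)
  have B: "(Bmat z *v x) $ i = (\<Sum>j\<in>UNIV. z$i$j * x$j)"
    by (simp add: Bmat_def matrix_vector_mult_def)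
  show ?thesis
    unfolding A using psi
    by (auto simp: Psi L B Pe Dl_def Tf_def Df_def trans_row_def matrix_vector_mult_diff_rdistrib
        algebra_simps sum_divide_distrib)
qed

lemma bvec_apply:
  assumes P: "P \<in> policies W Z Ds"
  shows "bvec \<delta> c k P $ i = Dl P i * Uf c k P i"
proof -
  obtain w z \<psi> where Pe: "P = (w, z, \<psi>)" by (cases P) auto
  have psi: "\<psi>$i = 0 \<or> \<psi>$i = 1" using pol_psi P Pe by blast
  have Psi: "(Psi \<psi> *v y) $ i = \<psi>$i * y$i" for y :: "real^'m"
  proof -
    have "\<And>j. (if i = j then \<psi>$i else 0) * y$j = (if i = j then \<psi>$i * y$i else 0)" by auto
    then show ?thesis by (simp add: Psi_def matrix_vector_mult_def)
  qed
  show ?thesis using psi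
    by (auto simp: bvec_def Pe Psi Dl_def Uf_def cvec_def matrix_vector_mult_diff_rdistrib)
qed


lemma maxprin:
  assumes P: "P \<in> policies W Z Ds" and sup: "\<And>i. Tf \<rho> P f i \<le> f i"
  shows "0 \<le> f i"
proof (rule ccontr)
  assume neg: "\<not> 0 \<le> f i"
  obtain w z \<psi> where Pe: "P = (w, z, \<psi>)" by (cases P) auto
  define m where "m = Min (range f)"
  have mle: "m \<le> f j" for j unfolding m_def by simp
  have "m \<in> range f" unfolding m_def by (rule Min_in) auto
  then obtain i0 where i0: "f i0 = m" by auto
  have m0: "m < 0" using mle[of i] neg by linarith
  have claim: "\<psi>$a = 1 \<and> (\<forall>j. z$a$j \<noteq> 0 \<longrightarrow> f j = m)" if fa: "f a = m" for a
  proof -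
    have pv: "prob_vec (trans_row P a)" by (rule pol_pv[OF P])
    have ge: "m \<le> (\<Sum>j\<in>UNIV. trans_row P a $ j * f j)"
    proof -
      have "(\<Sum>j\<in>UNIV. trans_row P a $ j * m) \<le> (\<Sum>j\<in>UNIV. trans_row P a $ j * f j)"
        using pv by (intro sum_mono mult_left_mono mle) (auto simp: prob_vec_def)
      then show ?thesis using pv by (simp add: prob_vec_def flip: sum_distrib_right)
    qed
    have psi: "\<psi>$a = 0 \<or> \<psi>$a = 1" using pol_psi P Pe by blast
    show ?thesis
    proof (cases "\<psi>$a = 0")
      case True
      then have "Tf \<rho> P f a = (\<Sum>j\<in>UNIV. trans_row P a $ j * f j) / (1 + \<rho>)"
        by (simp add: Tf_def Df_def Pe)
      then have "(\<Sum>j\<in>UNIV. trans_row P a $ j * f j) / (1 + \<rho>) \<le> m" using sup[of a] fa by simp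
      then have "(\<Sum>j\<in>UNIV. trans_row P a $ j * f j) \<le> m * (1 + \<rho>)" using rho by (simp add: field_simps)
      then have "m \<le> m * (1 + \<rho>)" using ge by linarith
      then have "0 \<le> m * \<rho>" by (simp add: algebra_simps)
      then have False using m0 rho by (simp add: mult_less_0_iff zero_le_mult_iff)
      then show ?thesis ..
    next
      case False
      then have ps: "\<psi>$a = 1" using psi by simp
      have tr: "trans_row P a = z$a" using ps by (simp add: trans_row_def Pe)
      have "Tf \<rho> P f a = (\<Sum>j\<in>UNIV. z$a$j * f j)"
        using ps by (simp add: Tf_def Df_def Pe trans_row_def)
      then have le: "(\<Sum>j\<in>UNIV. z$a$j * f j) \<le> m" using sup[of a] fa by simp
      have zn: "\<And>j. 0 \<le> z$a$j" and zs: "(\<Sum>j\<in>UNIV. z$a$j) = 1" using pv tr by (auto simp: prob_vec_def)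
      have "(\<Sum>j\<in>UNIV. z$a$j * (f j - m)) = (\<Sum>j\<in>UNIV. z$a$j * f j) - m"
        using zs by (simp add: right_diff_distrib sum_subtractf flip: sum_distrib_right)
      then have s0: "(\<Sum>j\<in>UNIV. z$a$j * (f j - m)) \<le> 0" using le by linarith
      have nn: "\<And>j. 0 \<le> z$a$j * (f j - m)" using zn mle by simp
      have "\<forall>j\<in>UNIV. z$a$j * (f j - m) = 0"
        using s0 nn sum_nonneg_eq_0_iff[of UNIV "\<lambda>j. z$a$j * (f j - m)"] by (simp add: order_antisym sum_nonneg)
      then show ?thesis using ps by auto
    qed
  qed
  obtain j where j: "\<psi>$j = 0" and path: "(i0, j) \<in> {(a, b). Bmat z $ a $ b \<noteq> 0}\<^sup>*"
    using H2[of w z \<psi> i0] claim[OF i0] P Pe by auto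
  have "f j = m" using path
  proof (induction rule: rtrancl_induct)
    case base then show ?case by (rule i0)
  next
    case (step a b)
    then show ?case using claim[of a] by (auto simp: Bmat_def)
  qed
  then show False using claim[of j] j by simp
qed

lemma Amat_nonneg:
  assumes P: "P \<in> policies W Z Ds" and A: "\<And>i. 0 \<le> (Amat \<rho> \<delta> P *v x) $ i"
  shows "0 \<le> x $ i"
proof -
  have "Tf \<rho> P (($) x) j \<le> x $ j" for j
    using A[of j] Dl_pos[of P j] unfolding Amat_apply[OF P] by (simp add: zero_le_mult_iff)
  then show ?thesis using maxprin[OF P, of "($) x" i] by simp
qed

lemma Amat_inj:
  assumes P: "P \<in> policies W Z Ds" and eq: "Amat \<rho> \<delta> P *v x = Amat \<rho> \<delta> P *v y"
  shows "x = y"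
proof -
  have "0 \<le> (x - y) $ i" for i
    by (rule Amat_nonneg[OF P]) (simp add: matrix_vector_mult_diff_distrib eq)
  moreover have "0 \<le> (y - x) $ i" for i
    by (rule Amat_nonneg[OF P]) (simp add: matrix_vector_mult_diff_distrib eq)
  ultimately show ?thesis by (auto simp: vec_eq_iff intro: order_antisym)
qed

lemma Amat_invertible:
  assumes P: "P \<in> policies W Z Ds"
  shows "invertible (Amat \<rho> \<delta> P)"
proof -
  have "inj ((*v) (Amat \<rho> \<delta> P))" by (auto intro!: injI Amat_inj[OF P])
  then show ?thesis by (simp add: invertible_left_inverse matrix_left_invertible_injective)
qed

lemma hs_pol:
  assumes P: "P \<in> policies W Z Ds"
  shows "\<exists>n. (Tf \<rho> P ^^ n) (\<lambda>_. 1) a < 1"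
proof -
  obtain w z \<psi> where Pe: "P = (w, z, \<psi>)" by (cases P) auto
  have pv: "\<And>a. prob_vec (trans_row P a)" by (rule pol_pv[OF P])
  have zero: "\<exists>n. (Tf \<rho> P ^^ n) (\<lambda>_. 1) b < 1" if "\<psi>$b = 0" for b
  proof -
    have "(Tf \<rho> P ^^ 1) (\<lambda>_. 1) b = 1 / (1 + \<rho>)"
      using that pv[of b] by (simp add: Tf_def Df_def Pe prob_vec_def)
    then show ?thesis using rho by (intro exI[of _ 1]) simp
  qed
  show ?thesis
  proof (cases "\<psi>$a = 0")
    case True then show ?thesis by (rule zero)
  next
    case False
    then have "\<psi>$a = 1" using pol_psi P Pe by blast
    then obtain j where j: "\<psi>$j = 0" and path: "(a, j) \<in> {(a, b). Bmat z $ a $ b \<noteq> 0}\<^sup>*"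
      using H2[of w z \<psi> a] P Pe by auto
    from path show ?thesis
    proof (induction rule: converse_rtrancl_induct)
      case base then show ?case by (rule zero[OF j])
    next
      case (step y y')
      show ?case
      proof (cases "\<psi>$y = 0")
        case True then show ?thesis by (rule zero)
      next
        case False
        then have ps: "\<psi>$y = 1" using pol_psi P Pe by blast
        obtain n where n: "(Tf \<rho> P ^^ n) (\<lambda>_. 1) y' < 1" using step.IH by blast
        have zy: "z$y$y' \<noteq> 0" using step.hyps(1) by (simp add: Bmat_def)
        have tr: "trans_row P y = z$y" using ps by (simp add: trans_row_def Pe)
        have zn: "\<And>j. 0 \<le> z$y$j" and zs: "(\<Sum>j\<in>UNIV. z$y$j) = 1"
          using pv[of y] tr by (auto simp: prob_vec_def)
        define g where "g = (Tf \<rho> P ^^ n) (\<lambda>_. 1)"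
        have g1: "\<And>j. g j \<le> 1" unfolding g_def by (rule Tpow_one[OF pv rho])
        have "(Tf \<rho> P ^^ Suc n) (\<lambda>_. 1) y = (\<Sum>j\<in>UNIV. z$y$j * g j)"
          using ps by (simp add: Tf_def Df_def Pe trans_row_def g_def)
        also have "\<dots> < (\<Sum>j\<in>UNIV. z$y$j * 1)"
        proof (rule sum_strict_mono_ex1)
          show "\<forall>x\<in>UNIV. z$y$x * g x \<le> z$y$x * 1" using zn g1 by (simp add: mult_left_le)
          show "\<exists>a\<in>UNIV. z$y$a * g a < z$y$a * 1"
            using zy zn[of y'] n unfolding g_def[symmetric] by (intro bexI[of _ y']) auto
        qed simp
        also have "\<dots> = 1" using zs by simp
        finally show ?thesis by blast
      qed
    qed
  qed
qed

lemma value_solves: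
  assumes P: "P \<in> policies W Z Ds"
  shows "Amat \<rho> \<delta> P *v (\<chi> i. mdp_value \<rho> c k P i) = bvec \<delta> c k P"
proof -
  have pv: "\<And>a. prob_vec (trans_row P a)" by (rule pol_pv[OF P])
  have hs: "\<And>a. \<exists>n. (Tf \<rho> P ^^ n) (\<lambda>_. 1) a < 1" by (rule hs_pol[OF P])
  define g where "g = Uf c k P"
  have mv: "mdp_value \<rho> c k P i = (\<Sum>n. (Tf \<rho> P ^^ n) g i)" for i
    unfolding mdp_value_def g_def
    using value_integral[OF pv rho hs, of "Uf c k P" i] by (simp add: tm_def)
  have fx: "(\<Sum>n. (Tf \<rho> P ^^ n) g i) - Tf \<rho> P (\<lambda>j. \<Sum>n. (Tf \<rho> P ^^ n) g j) i = g i" for i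
    using value_fix[OF pv rho hs, of g i] by simp
  have ev: "($) (\<chi> i. mdp_value \<rho> c k P i) = (\<lambda>j. \<Sum>n. (Tf \<rho> P ^^ n) g j)"
    by (rule ext) (simp add: mv)
  show ?thesis
    unfolding vec_eq_iff Amat_apply[OF P] bvec_apply[OF P] ev
    using fx unfolding g_def by simp
qed

end



lemma mv_bound:
  fixes M :: "real^'n::finite^'m::finite"
  assumes "\<And>i j. \<bar>M$i$j\<bar> \<le> B"
  shows "\<bar>(M *v y) $ i\<bar> \<le> B * (\<Sum>j\<in>UNIV. \<bar>y$j\<bar>)"
proof -
  have "\<bar>(M *v y) $ i\<bar> = \<bar>\<Sum>j\<in>UNIV. M$i$j * y$j\<bar>" by (simp add: matrix_vector_mult_def)
  also have "\<dots> \<le> (\<Sum>j\<in>UNIV. \<bar>M$i$j\<bar> * \<bar>y$j\<bar>)" by (rule order_trans[OF sum_abs]) (simp add: abs_mult)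
  also have "\<dots> \<le> (\<Sum>j\<in>UNIV. B * \<bar>y$j\<bar>)" by (intro sum_mono mult_right_mono assms) auto
  finally show ?thesis by (simp add: sum_distrib_left)
qed

lemma bounded_mat_entries:
  fixes S :: "(real^'n::finite^'m::finite) set"
  assumes "bounded S"
  shows "\<exists>B. \<forall>M\<in>S. \<forall>i j. \<bar>M$i$j\<bar> \<le> B"
proof -
  obtain a where a: "\<And>M. M \<in> S \<Longrightarrow> norm M \<le> a" using assms by (auto simp: bounded_iff)
  have "\<bar>M$i$j\<bar> \<le> a" if "M \<in> S" for M i j
    using component_le_norm_cart[of "M$i" j] Finite_Cartesian_Product.norm_nth_le[of M i] a[OF that]
    by linarith
  then show ?thesis by blast
qed

lemma bounded_vec_entries:
  fixes S :: "(real^'m::finite) set"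
  assumes "bounded S"
  shows "\<exists>B. \<forall>v\<in>S. \<forall>i. \<bar>v$i\<bar> \<le> B"
proof -
  obtain a where a: "\<And>M. M \<in> S \<Longrightarrow> norm M \<le> a" using assms by (auto simp: bounded_iff)
  have "\<bar>v$i\<bar> \<le> a" if "v \<in> S" for v i
    using component_le_norm_cart[of v i] a[OF that] by linarith
  then show ?thesis by blast
qed

lemma mv_null:
  fixes M :: "nat \<Rightarrow> real^'n::finite^'m::finite"
  assumes B: "\<And>l i j. \<bar>M l $i$j\<bar> \<le> B" and y: "y \<longlonglongrightarrow> 0"
  shows "(\<lambda>l. (M l *v y l) $ i) \<longlonglongrightarrow> 0"
proof (rule Lim_null_comparison)
  show "\<forall>\<^sub>F l in sequentially. norm ((M l *v y l) $ i) \<le> B * (\<Sum>j\<in>UNIV. \<bar>y l $ j\<bar>)"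
    using mv_bound[OF B] by simp
  have "(\<lambda>l. B * (\<Sum>j\<in>UNIV. \<bar>y l $ j\<bar>)) \<longlonglongrightarrow> B * (\<Sum>j\<in>UNIV. \<bar>(0::real^'n) $ j\<bar>)"
    by (intro tendsto_intros y)
  then show "(\<lambda>l. B * (\<Sum>j\<in>UNIV. \<bar>y l $ j\<bar>)) \<longlonglongrightarrow> 0" by simp
qed

lemma matrix_inv_left':
  fixes A :: "real^'n::finite^'n"
  assumes "invertible A"
  shows "matrix_inv A ** A = mat 1"
proof -
  have "\<exists>A'. A ** A' = mat 1 \<and> A' ** A = mat 1" using assms by (simp add: invertible_def)
  then show ?thesis unfolding matrix_inv_def by (rule someI2_ex) simp
qed




theorem corollary4p4:
  fixes \<rho> \<delta> :: real
    and W Z :: "'m::finite \<Rightarrow> (real^'m) set"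
    and Ds :: "'m \<Rightarrow> real set"
    and c k :: "'m \<Rightarrow> real^'m \<Rightarrow> real"
    and v0 :: "real^'m"
    and Ps :: "nat \<Rightarrow> 'm policy"
    and vs :: "nat \<Rightarrow> real^'m"
  assumes rho: "\<rho> > 0"
    and delta: "\<delta> > 0"
    and W: "\<And>i. W i \<noteq> {} \<and> (\<forall>p\<in>W i. prob_vec p)"
    and Z: "\<And>i. Z i \<noteq> {} \<and> (\<forall>p\<in>Z i. prob_vec p)"
    and Ds: "\<And>i. Ds i \<noteq> {} \<and> Ds i \<subseteq> {0, 1}"
    and H0: "bounded ((\<lambda>P. matrix_inv (Amat \<rho> \<delta> P)) ` {P \<in> policies W Z Ds. invertible (Amat \<rho> \<delta> P)})"
    and H1i: "bounded (Amat \<rho> \<delta> ` policies W Z Ds) \<and> bounded (bvec \<delta> c k ` policies W Z Ds)"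
    and H1ii: "\<And>x. \<exists>P\<in>policies W Z Ds.
                 - (Amat \<rho> \<delta> P *v x) + bvec \<delta> c k P
                 = supv (policies W Z Ds) (\<lambda>Q. - (Amat \<rho> \<delta> Q *v x) + bvec \<delta> c k Q)"
    and H2: "\<And>w z \<psi> i. (w, z, \<psi>) \<in> policies W Z Ds \<Longrightarrow> \<psi>$i = 1 \<Longrightarrow>
               \<exists>j. \<psi>$j = 0 \<and> (i, j) \<in> {(a, b). Bmat z $ a $ b \<noteq> 0}\<^sup>*"
    and init: "vs 0 = v0"
    and PI: "\<And>l. l \<ge> 1 \<Longrightarrow>
               Ps l \<in> policies W Z Ds
             \<and> - (Amat \<rho> \<delta> (Ps l) *v vs (l - 1)) + bvec \<delta> c k (Ps l)
                 = supv (policies W Z Ds) (\<lambda>Q. - (Amat \<rho> \<delta> Q *v vs (l - 1)) + bvec \<delta> c k Q)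
             \<and> Amat \<rho> \<delta> (Ps l) *v vs l = bvec \<delta> c k (Ps l)"
  shows "vs \<longlonglongrightarrow> (\<chi> i. SUP P\<in>policies W Z Ds. mdp_value \<rho> c k P i)"
proof -
  define Pol where "Pol = policies W Z Ds"
  have nonneg: "\<And>P x i. P \<in> Pol \<Longrightarrow> (\<And>i. 0 \<le> (Amat \<rho> \<delta> P *v x) $ i) \<Longrightarrow> 0 \<le> x $ i"
    unfolding Pol_def by (rule Amat_nonneg[of \<rho> \<delta> W Z Ds, OF rho delta W Z Ds]) (assumption | rule H2)+
  have inj: "\<And>P x y. P \<in> Pol \<Longrightarrow> Amat \<rho> \<delta> P *v x = Amat \<rho> \<delta> P *v y \<Longrightarrow> x = y"
    unfolding Pol_def by (rule Amat_inj[of \<rho> \<delta> W Z Ds, OF rho delta W Z Ds]) (assumption | rule H2)+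
  have inv: "\<And>P. P \<in> Pol \<Longrightarrow> invertible (Amat \<rho> \<delta> P)"
    unfolding Pol_def by (rule Amat_invertible[of \<rho> \<delta> W Z Ds, OF rho delta W Z Ds]) (assumption | rule H2)+
  have vsol: "\<And>P. P \<in> Pol \<Longrightarrow> Amat \<rho> \<delta> P *v (\<chi> i. mdp_value \<rho> c k P i) = bvec \<delta> c k P"
    unfolding Pol_def by (rule value_solves[of \<rho> \<delta> W Z Ds, OF rho delta W Z Ds]) (assumption | rule H2)+
  define A where "A = (Amat \<rho> \<delta> :: 'm policy \<Rightarrow> real^'m^'m)"
  define b where "b = (bvec \<delta> c k :: 'm policy \<Rightarrow> real^'m)"
  define G where "G (x::real^'m) (Q::'m policy) = - (A Q *v x) + b Q" for x Q
  define F where "F x = supv Pol (G x)" for x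
  have PIl: "Ps l \<in> Pol" "G (vs (l - 1)) (Ps l) = F (vs (l - 1))" "A (Ps l) *v vs l = b (Ps l)"
    if "l \<ge> 1" for l
    using PI[OF that] unfolding Pol_def G_def F_def A_def b_def by auto
  have H1ii': "\<exists>P\<in>Pol. G x P = F x" for x
    using H1ii[of x] unfolding Pol_def G_def F_def A_def b_def by auto
  obtain BA where BA: "\<And>Q i j. Q \<in> Pol \<Longrightarrow> \<bar>A Q $i$j\<bar> \<le> BA"
    using bounded_mat_entries[of "Amat \<rho> \<delta> ` policies W Z Ds"] H1i unfolding A_def Pol_def by blast
  obtain Bb where Bb: "\<And>Q i. Q \<in> Pol \<Longrightarrow> \<bar>b Q $i\<bar> \<le> Bb"
    using bounded_vec_entries[of "bvec \<delta> c k ` policies W Z Ds"] H1i unfolding b_def Pol_def by blast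
  obtain Bi where Bi: "\<And>Q i j. Q \<in> Pol \<Longrightarrow> \<bar>matrix_inv (A Q) $i$j\<bar> \<le> Bi"
  proof -
    obtain B where "\<forall>M\<in>(\<lambda>P. matrix_inv (Amat \<rho> \<delta> P)) ` {P \<in> policies W Z Ds. invertible (Amat \<rho> \<delta> P)}. \<forall>i j. \<bar>M$i$j\<bar> \<le> B"
      using bounded_mat_entries[OF H0] by blast
    then have "\<And>Q i j. Q \<in> Pol \<Longrightarrow> \<bar>matrix_inv (A Q) $i$j\<bar> \<le> B"
      using inv unfolding A_def Pol_def by blast
    then show ?thesis using that by blast
  qed
  have Gle: "G x Q $ i \<le> F x $ i" if Q: "Q \<in> Pol" for x Q i
  proof -
    have "bdd_above ((\<lambda>Q. G x Q $ i) ` Pol)"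
    proof (rule bdd_aboveI2)
      fix Q assume "Q \<in> Pol"
      then have "\<bar>(A Q *v x) $ i\<bar> \<le> BA * (\<Sum>j\<in>UNIV. \<bar>x$j\<bar>)" "\<bar>b Q $i\<bar> \<le> Bb"
        using mv_bound[of "A Q" BA x i] BA Bb by auto
      then show "G x Q $ i \<le> BA * (\<Sum>j\<in>UNIV. \<bar>x$j\<bar>) + Bb" unfolding G_def by simp
    qed
    then have "G x Q $ i \<le> (SUP P\<in>Pol. G x P $ i)" by (rule cSUP_upper[OF Q])
    then show ?thesis by (simp add: F_def supv_def)
  qed
  have vsb: "vs l $ i \<le> Bi * (\<Sum>j\<in>(UNIV::'m set). Bb)" if "l \<ge> 1" for l i
  proof -
    have Q: "Ps l \<in> Pol" using PIl[OF that] by simp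
    have "vs l = matrix_inv (A (Ps l)) *v (A (Ps l) *v vs l)"
      using matrix_inv_left'[OF inv[OF Q, folded A_def]] by (simp add: matrix_vector_mul_assoc)
    also have "\<dots> = matrix_inv (A (Ps l)) *v b (Ps l)" using PIl[OF that] by simp
    finally have e: "vs l $ i = (matrix_inv (A (Ps l)) *v b (Ps l)) $ i" by simp
    have "\<bar>(matrix_inv (A (Ps l)) *v b (Ps l)) $ i\<bar> \<le> Bi * (\<Sum>j\<in>UNIV. \<bar>b (Ps l) $ j\<bar>)"
      by (rule mv_bound) (rule Bi[OF Q])
    also have "\<dots> \<le> Bi * (\<Sum>j\<in>(UNIV::'m set). Bb)"
    proof (rule mult_left_mono)
      show "(\<Sum>j\<in>UNIV. \<bar>b (Ps l) $ j\<bar>) \<le> (\<Sum>j\<in>(UNIV::'m set). Bb)" by (intro sum_mono Bb[OF Q])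
      show "0 \<le> Bi" using Bi[OF Q] by (meson abs_ge_zero order_trans)
    qed
    finally show ?thesis unfolding e by linarith
  qed
  have Fid: "F (vs l) = A (Ps (Suc l)) *v (vs (Suc l) - vs l)" for l
  proof -
    have "F (vs l) = G (vs l) (Ps (Suc l))" using PIl(2)[of "Suc l"] by simp
    also have "\<dots> = A (Ps (Suc l)) *v (vs (Suc l) - vs l)"
      using PIl(3)[of "Suc l"] unfolding G_def by (simp add: matrix_vector_mult_diff_distrib)
    finally show ?thesis .
  qed
  have Gzero: "G (vs l) (Ps l) = 0" if "l \<ge> 1" for l
    using PIl(3)[OF that] unfolding G_def by simp
  have mono: "vs l $ i \<le> vs (Suc l) $ i" if "l \<ge> 1" for l i
  proof -
    have "0 \<le> (vs (Suc l) - vs l) $ i"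
    proof (rule nonneg)
      show "Ps (Suc l) \<in> Pol" using PIl(1)[of "Suc l"] by simp
      fix j
      have "0 = G (vs l) (Ps l) $ j" using Gzero[OF that] by simp
      also have "\<dots> \<le> F (vs l) $ j" by (rule Gle[OF PIl(1)[OF that]])
      finally show "0 \<le> (Amat \<rho> \<delta> (Ps (Suc l)) *v (vs (Suc l) - vs l)) $ j"
        using Fid[of l] unfolding A_def by simp
    qed
    then show ?thesis by simp
  qed
  define vstar where "vstar = (\<chi> i. SUP n. vs (Suc n) $ i)"
  have conv1: "(\<lambda>n. vs (Suc n)) \<longlonglongrightarrow> vstar"
  proof (rule vec_tendstoI)
    fix i
    have "(\<lambda>n. vs (Suc n) $ i) \<longlonglongrightarrow> (SUP n. vs (Suc n) $ i)"
    proof (rule LIMSEQ_incseq_SUP)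
      show "bdd_above (range (\<lambda>n. vs (Suc n) $ i))"
        using vsb by (intro bdd_aboveI2) auto
      show "incseq (\<lambda>n. vs (Suc n) $ i)"
        by (rule incseq_SucI) (rule mono, simp)
    qed
    then show "(\<lambda>n. vs (Suc n) $ i) \<longlonglongrightarrow> vstar $ i" by (simp add: vstar_def)
  qed
  then have conv: "vs \<longlonglongrightarrow> vstar" by (rule filterlim_sequentially_Suc[THEN iffD1])
  have BA': "\<bar>A (Ps (Suc l)) $ i $ j\<bar> \<le> BA" for l i j by (rule BA[OF PIl(1)]) simp
  have F0: "(\<lambda>l. F (vs l) $ i) \<longlonglongrightarrow> 0" for i
  proof -
    have "(\<lambda>l. vs (Suc l) - vs l) \<longlonglongrightarrow> vstar - vstar" by (intro tendsto_diff conv1 conv)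
    then have "(\<lambda>l. (A (Ps (Suc l)) *v (vs (Suc l) - vs l)) $ i) \<longlonglongrightarrow> 0"
      by (intro mv_null[OF BA']) simp
    then show ?thesis unfolding Fid .
  qed
  have Gconv: "(\<lambda>l. G (vs l) Q $ i) \<longlonglongrightarrow> G vstar Q $ i" if Q: "Q \<in> Pol" for Q i
  proof -
    have "(\<lambda>l. (A Q *v (vs l - vstar)) $ i) \<longlonglongrightarrow> 0"
      by (rule mv_null[where B=BA]) (use BA[OF Q] conv in \<open>auto intro: LIM_zero\<close>)
    then have "(\<lambda>l. - (A Q *v (vs l - vstar)) $ i + G vstar Q $ i) \<longlonglongrightarrow> - 0 + G vstar Q $ i"
      by (intro tendsto_intros)
    then show ?thesis unfolding G_def by (simp add: matrix_vector_mult_diff_distrib)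
  qed
  have le0: "G vstar Q $ i \<le> 0" if Q: "Q \<in> Pol" for Q i
    by (rule tendsto_le[OF trivial_limit_sequentially F0[of i] Gconv[OF Q]]) (simp add: Gle[OF Q])
  obtain Pst where Pst: "Pst \<in> Pol" "G vstar Pst = F vstar" using H1ii' by blast
  have ge0: "0 \<le> F vstar $ i" for i
  proof -
    have "(\<lambda>l. (A (Ps (Suc l)) *v (vs (Suc l) - vstar)) $ i) \<longlonglongrightarrow> 0"
      by (rule mv_null[OF BA']) (use conv1 in \<open>auto intro: LIM_zero\<close>)
    moreover have "(A (Ps (Suc l)) *v (vs (Suc l) - vstar)) $ i \<le> F vstar $ i" for l
    proof -
      have "(A (Ps (Suc l)) *v (vs (Suc l) - vstar)) $ i = G vstar (Ps (Suc l)) $ i"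
        using PIl(3)[of "Suc l"] unfolding G_def by (simp add: matrix_vector_mult_diff_distrib)
      also have "\<dots> \<le> F vstar $ i" by (rule Gle[OF PIl(1)]) simp
      finally show ?thesis .
    qed
    ultimately show ?thesis
      by (intro tendsto_le[OF trivial_limit_sequentially tendsto_const]) auto
  qed
  have solve: "A Pst *v vstar = b Pst"
  proof -
    have "G vstar Pst = 0"
      using le0[OF Pst(1)] ge0 Pst(2) by (simp add: vec_eq_iff order_antisym)
    then show ?thesis unfolding G_def by (simp add: algebra_simps)
  qed
  define V where "V Q = (\<chi> i. mdp_value \<rho> c k Q i)" for Q
  have V: "A Q *v V Q = b Q" if "Q \<in> Pol" for Q
    using vsol[OF that] unfolding V_def A_def b_def .
  have Vle: "mdp_value \<rho> c k Q i \<le> vstar $ i" if Q: "Q \<in> Pol" for Q i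
  proof -
    have "0 \<le> (vstar - V Q) $ i"
    proof (rule nonneg[OF Q])
      fix j
      have "(Amat \<rho> \<delta> Q *v (vstar - V Q)) $ j = - G vstar Q $ j"
        using V[OF Q] unfolding G_def A_def by (simp add: matrix_vector_mult_diff_distrib)
      then show "0 \<le> (Amat \<rho> \<delta> Q *v (vstar - V Q)) $ j" using le0[OF Q, of j] by simp
    qed
    then show ?thesis by (simp add: V_def)
  qed
  have VPst: "V Pst = vstar"
    by (rule inj[OF Pst(1)]) (use V[OF Pst(1)] solve in \<open>simp add: A_def\<close>)
  have "(\<chi> i. SUP P\<in>policies W Z Ds. mdp_value \<rho> c k P i) = vstar"
  proof (subst vec_eq_iff, intro allI)
    fix i
    have "(SUP P\<in>Pol. mdp_value \<rho> c k P i) = vstar $ i"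
    proof (rule cSup_eq_maximum)
      show "vstar $ i \<in> (\<lambda>P. mdp_value \<rho> c k P i) ` Pol"
        using Pst(1) VPst by (auto simp: V_def vec_eq_iff intro!: image_eqI[of _ _ Pst])
      show "\<And>x. x \<in> (\<lambda>P. mdp_value \<rho> c k P i) ` Pol \<Longrightarrow> x \<le> vstar $ i" using Vle by auto
    qed
    then show "(\<chi> i. SUP P\<in>policies W Z Ds. mdp_value \<rho> c k P i) $ i = vstar $ i"
      by (simp add: Pol_def)
  qed
  then show ?thesis using conv by simp
qed


end
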